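(* 1. $\mathrm{DCFL}\cap\mathrm{1RFA}/Rn\nsubseteq\mathrm{REG}/n$. 2. $\mathrm{1RFA}/Rn\nsubseteq\mathrm{CFL}/n$.
   Context: $\mathrm{DCFL}$ is the family of deterministic context-free languages. For equal-length strings $x,y$, $\genfrac{[}{]}{0pt}{}{x}{y}$ is the two-track string with $x$ on the upper track and $y$ on the lower track. $\mathrm{REG}/n$ (resp. $\mathrm{CFL}/n$) is the family of languages $L$ for which there exist a one-way deterministic finite automaton (resp. one-way nondeterministic pushdown automaton) $M$, an advice alphabet $\Gamma$ and an advice function $h:\mathbb{N}\to\Gamma^*$ with $|h(n)|=n$ such that $x\in L$ iff $M$ accepts $\genfrac{[}{]}{0pt}{}{x}{h(|x|)}$. A 1rfa is a one-way deterministic finite automaton satisfying the reversibility condition (for every state $q$ and tape symbol $\sigma$ at most one $q'$ with $\delta(q',\sigma)=q$). $\mathrm{1RFA}/Rn$ is the family of languages $L$ for which there exist a 1rfa $M$, an error bound $\varepsilon\in[0,1/2)$, an advice alphabet $\Gamma$ and randomized advice, i.e. a probability ensemble $\{D_n\}_{n\in\mathbb{N}}$ with $D_n$ a distribution on $\Gamma^n$, such that for every $n$ and $x\in\Sigma^n$, $M$ on $\genfrac{[}{]}{0pt}{}{x}{y}$ outputs $L(x)$ with probability at least $1-\varepsilon$ when $y$ is drawn according to $D_n$. *)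

theory Defs
  imports "HOL-Probability.Probability_Mass_Function"
begin

text \<open>Languages are sets of words over a finite alphabet \<open>\<Sigma> :: nat set\<close>
  (every finite alphabet can be coded into nat).  Two-track strings over \<open>\<Sigma> \<times> \<Gamma>\<close> are
  represented by \<open>zip x y\<close> for equal-length \<open>x, y\<close>.\<close>

record 'i dfa =
  d_states :: "nat set"
  d_init   :: nat
  d_delta  :: "nat \<Rightarrow> 'i \<Rightarrow> nat"
  d_final  :: "nat set"

definition dfa :: "'i set \<Rightarrow> 'i dfa \<Rightarrow> bool" where
  "dfa A M \<longleftrightarrow> finite (d_states M) \<and> d_init M \<in> d_states M \<and> d_final M \<subseteq> d_states M \<and>
     (\<forall>q\<in>d_states M. \<forall>a\<in>A. d_delta M q a \<in> d_states M)"

definition dfa_accepts :: "'i dfa \<Rightarrow> 'i list \<Rightarrow> bool" where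
  "dfa_accepts M w \<longleftrightarrow> foldl (d_delta M) (d_init M) w \<in> d_final M"

definition rfa :: "'i set \<Rightarrow> 'i dfa \<Rightarrow> bool" where
  "rfa A M \<longleftrightarrow> dfa A M \<and>
     (\<forall>q\<in>d_states M. \<forall>a\<in>A. \<forall>q1\<in>d_states M. \<forall>q2\<in>d_states M.
        d_delta M q1 a = q \<and> d_delta M q2 a = q \<longrightarrow> q1 = q2)"

record 'i pda =
  p_states :: "nat set"
  p_stack  :: "nat set"
  p_init   :: nat
  p_bottom :: nat
  p_final  :: "nat set"
  p_trans  :: "(nat \<times> 'i option \<times> nat \<times> nat \<times> nat list) set"

definition pda :: "'i set \<Rightarrow> 'i pda \<Rightarrow> bool" where
  "pda A M \<longleftrightarrow> finite (p_states M) \<and> finite (p_stack M) \<and>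
     p_init M \<in> p_states M \<and> p_bottom M \<in> p_stack M \<and> p_final M \<subseteq> p_states M \<and>
     finite (p_trans M) \<and>
     (\<forall>(q, a, Z, p, \<alpha>) \<in> p_trans M. q \<in> p_states M \<and> p \<in> p_states M \<and>
        Z \<in> p_stack M \<and> set \<alpha> \<subseteq> p_stack M \<and> (\<forall>b. a = Some b \<longrightarrow> b \<in> A))"

text \<open>Configurations: (state, remaining input, stack with top first).\<close>
definition pda_step :: "'i pda \<Rightarrow> nat \<times> 'i list \<times> nat list \<Rightarrow> nat \<times> 'i list \<times> nat list \<Rightarrow> bool" where
  "pda_step M c c' \<longleftrightarrow> (case c of (q, w, s) \<Rightarrow> case c' of (p, w', s') \<Rightarrow>
     (\<exists>Z \<gamma> \<alpha>. s = Z # \<gamma> \<and> s' = \<alpha> @ \<gamma> \<and>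
        ((\<exists>a. w = a # w' \<and> (q, Some a, Z, p, \<alpha>) \<in> p_trans M) \<or>
         (w' = w \<and> (q, None, Z, p, \<alpha>) \<in> p_trans M))))"

definition pda_accepts :: "'i pda \<Rightarrow> 'i list \<Rightarrow> bool" where
  "pda_accepts M w \<longleftrightarrow> (\<exists>p \<gamma>. p \<in> p_final M \<and>
      (pda_step M)\<^sup>*\<^sup>* (p_init M, w, [p_bottom M]) (p, [], \<gamma>))"

definition dpda :: "'i set \<Rightarrow> 'i pda \<Rightarrow> bool" where
  "dpda A M \<longleftrightarrow> pda A M \<and>
     (\<forall>q a Z p \<alpha> p' \<alpha>'. (q, a, Z, p, \<alpha>) \<in> p_trans M \<and> (q, a, Z, p', \<alpha>') \<in> p_trans M
         \<longrightarrow> p = p' \<and> \<alpha> = \<alpha>') \<and>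
     (\<forall>q Z p \<alpha> b p' \<alpha>'. (q, None, Z, p, \<alpha>) \<in> p_trans M \<longrightarrow> (q, Some b, Z, p', \<alpha>') \<notin> p_trans M)"

definition DCFL :: "nat set \<Rightarrow> nat list set set" where
  "DCFL \<Sigma> = {L. L \<subseteq> lists \<Sigma> \<and> (\<exists>M :: nat pda. dpda \<Sigma> M \<and> L = {w \<in> lists \<Sigma>. pda_accepts M w})}"

definition advice_fun :: "nat set \<Rightarrow> (nat \<Rightarrow> nat list) \<Rightarrow> bool" where
  "advice_fun \<Gamma> h \<longleftrightarrow> (\<forall>n. length (h n) = n \<and> set (h n) \<subseteq> \<Gamma>)"

definition REG_n :: "nat set \<Rightarrow> nat list set set" where
  "REG_n \<Sigma> = {L. L \<subseteq> lists \<Sigma> \<and> (\<exists>(M :: (nat \<times> nat) dfa) \<Gamma> h. finite \<Gamma> \<and> dfa (\<Sigma> \<times> \<Gamma>) M \<and>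
      advice_fun \<Gamma> h \<and> (\<forall>x \<in> lists \<Sigma>. x \<in> L \<longleftrightarrow> dfa_accepts M (zip x (h (length x)))))}"

definition CFL_n :: "nat set \<Rightarrow> nat list set set" where
  "CFL_n \<Sigma> = {L. L \<subseteq> lists \<Sigma> \<and> (\<exists>(M :: (nat \<times> nat) pda) \<Gamma> h. finite \<Gamma> \<and> pda (\<Sigma> \<times> \<Gamma>) M \<and>
      advice_fun \<Gamma> h \<and> (\<forall>x \<in> lists \<Sigma>. x \<in> L \<longleftrightarrow> pda_accepts M (zip x (h (length x)))))}"

definition RFA_Rn :: "nat set \<Rightarrow> nat list set set" where
  "RFA_Rn \<Sigma> = {L. L \<subseteq> lists \<Sigma> \<and> (\<exists>(M :: (nat \<times> nat) dfa) (\<epsilon> :: real) \<Gamma> (D :: nat \<Rightarrow> nat list pmf).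
      finite \<Gamma> \<and> rfa (\<Sigma> \<times> \<Gamma>) M \<and> 0 \<le> \<epsilon> \<and> \<epsilon> < 1/2 \<and>
      (\<forall>n. set_pmf (D n) \<subseteq> {y. length y = n \<and> set y \<subseteq> \<Gamma>}) \<and>
      (\<forall>x \<in> lists \<Sigma>. measure_pmf.prob (D (length x))
          {y. dfa_accepts M (zip x y) \<longleftrightarrow> x \<in> L} \<ge> 1 - \<epsilon>))}"

end

theory Submission
  imports Defs "HOL-Library.FuncSet" "HOL-Library.Countable_Set"
begin


definition xm :: "(nat \<Rightarrow> nat \<Rightarrow> nat) \<Rightarrow> (nat \<times> nat) dfa" where
  "xm h = \<lparr>d_states = {0,1}, d_init = 0, d_delta = (\<lambda>q (s,g). (q + h s g) mod 2), d_final = {1}\<rparr>"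

lemma xm_rfa: "rfa A (xm h)"
  unfolding rfa_def dfa_def xm_def by auto presburger+

lemma xm_foldl: "q < 2 \<Longrightarrow> foldl (d_delta (xm h)) q zs = (q + sum_list (map (\<lambda>(s,g). h s g) zs)) mod 2"
proof (induction zs arbitrary: q)
  case Nil then show ?case by (simp add: xm_def)
next
  case (Cons z zs)
  obtain s g where z: "z = (s,g)" by fastforce
  show ?case using Cons z by (simp add: xm_def mod_add_left_eq add.assoc)
qed

lemma xm_accepts: "length x = length y \<Longrightarrow>
   dfa_accepts (xm h) (zip x y) \<longleftrightarrow> odd (\<Sum>p<length x. h (x!p) (y!p))"
  unfolding dfa_accepts_def
  by (subst xm_foldl) (simp add: xm_def, (simp add: xm_def sum_list_sum_nth atLeast0LessThan odd_iff_mod_2_eq_one))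

lemma fp_regroup:
  fixes c :: "'k \<Rightarrow> nat" and r :: "nat \<Rightarrow> nat" and \<sigma> :: "'k \<Rightarrow> nat"
  assumes "finite K"
  shows "(\<Sum>k\<in>K. c k * r (\<sigma> k)) = (\<Sum>i\<in>\<sigma>`K. r i * (\<Sum>k\<in>{k\<in>K. \<sigma> k = i}. c k))"
  apply (subst sum.image_gen[OF assms, where g=\<sigma>])
  apply (rule sum.cong, simp)
  subgoal for i
  proof -
    have "(\<Sum>k\<in>{x \<in> K. \<sigma> x = i}. c k * r (\<sigma> k)) = (\<Sum>k\<in>{x \<in> K. \<sigma> x = i}. c k * r i)"
      by (rule sum.cong) auto
    also have "\<dots> = (\<Sum>k\<in>{x \<in> K. \<sigma> x = i}. c k) * r i" by (simp add: sum_distrib_right)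
    finally show ?thesis by (simp add: mult.commute)
  qed
  done

lemma fp_caseA:
  fixes c :: "'k \<Rightarrow> nat" and r :: "nat \<Rightarrow> nat" and \<sigma> :: "'k \<Rightarrow> nat"
  assumes "finite K" "\<forall>i. even (\<Sum>k\<in>{k\<in>K. \<sigma> k = i}. c k)"
  shows "even (\<Sum>k\<in>K. c k * (r (\<sigma> k)::nat))"
  unfolding fp_regroup[OF assms(1)] using assms(2) by (auto intro!: dvd_sum)

lemma fp_caseB:
  fixes \<sigma> :: "'k \<Rightarrow> nat" and c :: "'k \<Rightarrow> nat"
  assumes K: "finite K" and sK: "\<sigma> ` K \<subseteq> {..<N}" and odd: "odd (\<Sum>k\<in>{k\<in>K. \<sigma> k = i}. c k)"
  defines "B \<equiv> PiE {..<N} (\<lambda>_. {0::nat,1})"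
  shows "card {r\<in>B. odd (\<Sum>k\<in>K. c k * r (\<sigma> k))} * 2 = card B"
proof -
  define cs where "cs = (\<Sum>k\<in>{k\<in>K. \<sigma> k = i}. c k)"
  define fp where "fp = (\<lambda>r::nat\<Rightarrow>nat. \<Sum>k\<in>K. c k * r (\<sigma> k))"
  have iK: "i \<in> \<sigma> ` K"
  proof (rule ccontr)
    assume "i \<notin> \<sigma> ` K"
    then have e: "{k\<in>K. \<sigma> k = i} = {}" by auto
    have "(\<Sum>k\<in>{k\<in>K. \<sigma> k = i}. c k) = 0" by (subst e) simp
    then show False using odd by simp
  qed
  have iN: "i < N" using iK sK by auto
  define \<phi> where "\<phi> = (\<lambda>r::nat\<Rightarrow>nat. r(i := 1 - r i))"
  have split: "fp r = r i * cs + (\<Sum>j\<in>\<sigma>`K - {i}. r j * (\<Sum>k\<in>{k\<in>K. \<sigma> k = j}. c k))" for r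
    unfolding fp_def fp_regroup[OF K] cs_def
    by (rule sum.remove[OF finite_imageI[OF K] iK])
  have rest: "(\<Sum>j\<in>\<sigma>`K - {i}. \<phi> r j * (\<Sum>k\<in>{k\<in>K. \<sigma> k = j}. c k))
       = (\<Sum>j\<in>\<sigma>`K - {i}. r j * (\<Sum>k\<in>{k\<in>K. \<sigma> k = j}. c k))" for r
    by (rule sum.cong) (simp_all add: \<phi>_def)
  have flip: "odd (fp (\<phi> r)) \<longleftrightarrow> even (fp r)" if "r \<in> B" for r
  proof -
    have ri: "r i \<in> {0,1}" using that iN unfolding B_def by (auto simp: PiE_iff)
    have odd_cs: "odd cs" using odd cs_def by simp
    define T where "T = (\<Sum>j\<in>\<sigma>`K - {i}. r j * (\<Sum>k\<in>{k\<in>K. \<sigma> k = j}. c k))"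
    have e2: "fp r = r i * cs + T" using split[of r] unfolding T_def .
    have e1: "fp (\<phi> r) = (1 - r i) * cs + T"
      using split[of "\<phi> r"] rest[of r] unfolding T_def by (simp add: \<phi>_def)
    from ri show ?thesis
    proof
      assume "r i = 0" then show ?thesis using e1 e2 odd_cs by simp
    next
      assume "r i \<in> {1}" then show ?thesis using e1 e2 odd_cs by simp
    qed
  qed
  have phiB: "\<phi> r \<in> B" if "r \<in> B" for r
    using that iN unfolding B_def \<phi>_def by (auto simp: PiE_iff extensional_def)
  have phiphi: "\<phi> (\<phi> r) = r" if "r \<in> B" for r
  proof -
    have ri: "r i \<in> {0,1}" using that iN unfolding B_def by (auto simp: PiE_iff)
    then show ?thesis by (auto simp: \<phi>_def)
  qed
  define P1 where "P1 = {r\<in>B. odd (fp r)}"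
  define P0 where "P0 = {r\<in>B. even (fp r)}"
  have bij: "bij_betw \<phi> P1 P0"
  proof (rule bij_betw_byWitness[where f'=\<phi>])
    show "\<forall>a\<in>P1. \<phi> (\<phi> a) = a" using phiphi unfolding P1_def by blast
    show "\<forall>a\<in>P0. \<phi> (\<phi> a) = a" using phiphi unfolding P0_def by blast
    show "\<phi> ` P1 \<subseteq> P0" using phiB flip unfolding P1_def P0_def by blast
    show "\<phi> ` P0 \<subseteq> P1"
    proof
      fix y assume "y \<in> \<phi> ` P0"
      then obtain r where r: "r \<in> P0" "y = \<phi> r" by blast
      then show "y \<in> P1" using phiB[of r] flip[of r] unfolding P1_def P0_def by auto
    qed
  qed
  have finB: "finite B" unfolding B_def by (auto intro: finite_PiE)
  have "B = P1 \<union> P0" unfolding P1_def P0_def by auto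
  then have "card B = card P1 + card P0"
  proof -
    have f: "finite P1" "finite P0" using finB unfolding P1_def P0_def by auto
    have "P1 \<inter> P0 = {}" unfolding P1_def P0_def by auto
    then show ?thesis using card_Un_disjoint[OF f] \<open>B = P1 \<union> P0\<close> by simp
  qed
  moreover have "card P1 = card P0" using bij_betw_same_card[OF bij] .
  ultimately show ?thesis unfolding P1_def fp_def by simp
qed




lemma prob_lemma:
  fixes adv :: "nat \<times> 'r \<Rightarrow> nat list" and acc :: "nat list \<Rightarrow> bool"
  assumes finB: "finite B" and neB: "B \<noteq> {}"
    and acc: "\<And>a r. a \<in> {0,1,2} \<Longrightarrow> r \<in> B \<Longrightarrow> acc (adv (a,r)) \<longleftrightarrow> (a \<noteq> 0 \<and> Q r)"
    and cases: "(good \<and> (\<forall>r\<in>B. Q r)) \<or> (\<not> good \<and> card {r\<in>B. \<not> Q r} * 2 = card B)"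
  shows "measure_pmf.prob (map_pmf adv (pmf_of_set ({0,1,2::nat} \<times> B))) {y. acc y \<longleftrightarrow> good} \<ge> 1 - 1/3"
proof -
  define R where "R = {0,1,2::nat} \<times> B"
  have finR: "finite R" and neR: "R \<noteq> {}" using finB neB unfolding R_def by auto
  have cR: "card R = 3 * card B" unfolding R_def by (simp add: card_cartesian_product)
  define S where "S = R \<inter> adv -` {y. acc y \<longleftrightarrow> good}"
  have S_eq: "S = {p\<in>R. (fst p \<noteq> 0 \<and> Q (snd p)) \<longleftrightarrow> good}"
    unfolding S_def R_def using acc by auto
  have cS: "card S = 2 * card B"
    using cases
  proof
    assume g: "good \<and> (\<forall>r\<in>B. Q r)"
    then have "S = {1,2} \<times> B" unfolding S_eq R_def by auto
    then show ?thesis by (simp add: card_cartesian_product)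
  next
    assume g: "\<not> good \<and> card {r\<in>B. \<not> Q r} * 2 = card B"
    define P where "P = {r\<in>B. \<not> Q r}"
    have "S = ({0} \<times> B) \<union> ({1,2} \<times> P)" unfolding S_eq R_def P_def using g by auto
    moreover have "({0::nat} \<times> B) \<inter> ({1,2} \<times> P) = {}" by auto
    moreover have "finite P" using finB unfolding P_def by auto
    ultimately have "card S = card ({0::nat} \<times> B) + card ({1,2::nat} \<times> P)"
      using finB by (simp add: card_Un_disjoint)
    also have "\<dots> = card B + 2 * card P" by (simp add: card_cartesian_product)
    finally show ?thesis using g unfolding P_def by simp
  qed
  have pos: "card B > 0" using finB neB by (simp add: card_gt_0_iff)
  have "measure_pmf.prob (map_pmf adv (pmf_of_set R)) {y. acc y \<longleftrightarrow> good} = real (card S) / real (card R)"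
    unfolding measure_map_pmf measure_pmf_of_set[OF neR finR] S_def ..
  also have "\<dots> = 2/3" using cS cR pos by (simp add: field_simps)
  finally show ?thesis unfolding R_def by simp
qed




lemma growth: "\<exists>N. \<forall>n\<ge>N. (g::nat) ^ n < (n div 2) ^ (n div 2)"
proof (intro exI allI impI)
  fix n assume n: "n \<ge> 4 * (g * g) + 4"
  define m where "m = n div 2"
  have m: "m \<ge> 2 * (g * g) + 2" "n \<le> 2 * m + 1" using n unfolding m_def by auto
  show "g ^ n < (n div 2) ^ (n div 2)"
  proof (cases "g = 0")
    case True
    have "m > 0" using n m by auto
    then have p: "m ^ m > 0" by simp
    have "g ^ n = 0" using n True by simp
    then show ?thesis using p unfolding m_def[symmetric] by linarith
  next
    case False
    have gm: "g \<le> m" using m False by (metis add_leD1 le_add2 le_square mult_2 order.trans le_add1)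
    have "g ^ n \<le> g ^ (2 * m + 1)" using False m by (intro power_increasing) auto
    also have "\<dots> = g * (g * g) ^ m" by (simp add: power_mult power2_eq_square[symmetric] power_add)
    also have "\<dots> < 2 ^ m * (g * g) ^ m"
    proof -
      have "g < 2 ^ g" by (rule less_exp)
      also have "\<dots> \<le> 2 ^ m" using gm by (intro power_increasing) auto
      finally have "g < 2 ^ m" .
      moreover have "(g * g) ^ m > 0" using False by simp
      ultimately show ?thesis by simp
    qed
    also have "\<dots> = (2 * (g * g)) ^ m" by (simp add: power_mult_distrib)
    also have "\<dots> \<le> m ^ m" using m by (intro power_mono) auto
    finally show ?thesis unfolding m_def .
  qed
qed

definition Mach :: "((nat \<times> nat) pda \<times> nat set) set" where
  "Mach = {(M, \<Gamma>). finite \<Gamma> \<and> pda ({0,1} \<times> \<Gamma>) M}"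

lemma countable_Mach: "countable Mach"
proof -
  define f where "f = (\<lambda>(M::(nat \<times> nat) pda, \<Gamma>::nat set).
     (p_states M, p_stack M, p_init M, p_bottom M, p_final M, p_trans M, \<Gamma>))"
  have inj: "inj f"
    by (rule injI) (auto simp: f_def pda.equality split: prod.splits)
  define A where "A = (Collect finite :: nat set set) \<times> (Collect finite :: nat set set) \<times> (UNIV::nat set) \<times> (UNIV::nat set) \<times>
     (Collect finite :: nat set set) \<times> (Collect finite :: (nat \<times> (nat \<times> nat) option \<times> nat \<times> nat \<times> nat list) set set)
     \<times> (Collect finite :: nat set set)"
  have cA: "countable A" unfolding A_def
    by (intro countable_SIGMA countable_Collect_finite) auto
  have "Mach \<subseteq> {x. f x \<in> A}"
    unfolding Mach_def A_def f_def pda_def by (auto intro: finite_subset)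
  then show ?thesis using countable_image_inj[OF cA inj] countable_subset by blast
qed




definition sig :: "nat \<Rightarrow> (nat \<Rightarrow> nat) \<Rightarrow> nat \<Rightarrow> nat" where
  "sig n \<pi> p = (if n div 2 \<le> p \<and> p < 2 * (n div 2) then \<pi> (p - n div 2) else p)"

definition cls :: "nat \<Rightarrow> (nat \<Rightarrow> nat) \<Rightarrow> nat list \<Rightarrow> nat \<Rightarrow> nat" where
  "cls n \<pi> x i = (\<Sum>p\<in>{p\<in>{..<n}. sig n \<pi> p = i}. x ! p)"

definition good2 :: "nat \<Rightarrow> (nat \<Rightarrow> nat) \<Rightarrow> nat list \<Rightarrow> bool" where
  "good2 n \<pi> x \<longleftrightarrow> (\<forall>i. even (cls n \<pi> x i))"

definition h2 :: "nat \<Rightarrow> nat \<Rightarrow> nat" where "h2 s g = s * (g mod 2) + g div 2"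

definition adv2 :: "nat \<Rightarrow> (nat \<Rightarrow> nat) \<Rightarrow> nat \<times> (nat \<Rightarrow> nat) \<Rightarrow> nat list" where
  "adv2 n \<pi> ar = (if fst ar = 0 then replicate n 0
     else map (\<lambda>p. snd ar (sig n \<pi> p) + (if p = 0 then 2 else 0)) [0..<n])"

lemma sig_bound: "(\<forall>j. j < n div 2 \<longrightarrow> \<pi> j < n) \<Longrightarrow> p < n \<Longrightarrow> sig n \<pi> p < n"
  unfolding sig_def by auto

lemma acc2:
  assumes bd: "\<forall>j. j < n div 2 \<longrightarrow> \<pi> j < n" and n: "0 < n" and x: "length x = n"
    and r: "r \<in> PiE {..<n} (\<lambda>_. {0::nat,1})"
  shows "dfa_accepts (xm h2) (zip x (adv2 n \<pi> (a,r))) \<longleftrightarrow>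
     (a \<noteq> 0 \<and> even (\<Sum>p\<in>{..<n}. x!p * r (sig n \<pi> p)))"
proof -
  have len: "length x = length (adv2 n \<pi> (a,r))" using x by (simp add: adv2_def)
  show ?thesis
  proof (cases "a = 0")
    case True
    then show ?thesis unfolding xm_accepts[OF len] by (simp add: adv2_def h2_def x)
  next
    case False
    have rv: "r (sig n \<pi> p) \<in> {0,1}" if "p < n" for p
      using r sig_bound[OF bd that] by (auto simp: PiE_iff)
    have tm: "h2 (x!p) (adv2 n \<pi> (a,r) ! p) = x!p * r (sig n \<pi> p) + (if p = 0 then 1 else 0)"
      if "p < n" for p
      using rv[OF that] that False by (auto simp: adv2_def h2_def)
    have "(\<Sum>p<length x. h2 (x!p) (adv2 n \<pi> (a,r) ! p)) =
        (\<Sum>p<n. x!p * r (sig n \<pi> p)) + (\<Sum>p<n. (if p = 0 then 1 else 0))"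
      unfolding x by (simp add: tm sum.distrib)
    also have "(\<Sum>p<n. (if p = 0 then 1 else 0)::nat) = 1" using n by simp
    finally show ?thesis unfolding xm_accepts[OF len] using False by simp
  qed
qed

definition L2of :: "(nat \<Rightarrow> nat \<Rightarrow> nat) \<Rightarrow> nat list set" where
  "L2of pk = {x \<in> lists {0,1}. 0 < length x \<and> good2 (length x) (pk (length x)) x}"

lemma L2_RFA:
  assumes bd: "\<forall>n j. j < n div 2 \<longrightarrow> pk n j < n"
  shows "L2of pk \<in> RFA_Rn {0,1}"
proof -
  define B where "B = (\<lambda>n::nat. PiE {..<n} (\<lambda>_. {0::nat,1}))"
  define D where "D = (\<lambda>n. if n = 0 then return_pmf []
     else map_pmf (adv2 n (pk n)) (pmf_of_set ({0,1,2::nat} \<times> B n)))"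
  have finB: "finite (B n)" for n unfolding B_def by (auto intro: finite_PiE)
  have neB: "B n \<noteq> {}" for n unfolding B_def by (simp add: PiE_eq_empty_iff)
  have setD: "set_pmf (D n) \<subseteq> {y. length y = n \<and> set y \<subseteq> {0,1,2,3}}" for n
  proof (cases "n = 0")
    case True then show ?thesis by (simp add: D_def)
  next
    case False
    have "set_pmf (pmf_of_set ({0,1,2::nat} \<times> B n)) = {0,1,2} \<times> B n"
      using finB neB by (intro set_pmf_of_set) auto
    moreover have "adv2 n (pk n) (a,r) \<in> {y. length y = n \<and> set y \<subseteq> {0,1,2,3}}" if "r \<in> B n" for a r
    proof -
      have rv: "r (sig n (pk n) p) \<in> {0,1}" if "p < n" for p
        using \<open>r \<in> B n\<close> sig_bound[of n "pk n" p] bd that unfolding B_def by (auto simp: PiE_iff)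
      have fv: "r (sig n (pk n) p) + (if p = 0 then 2 else 0) \<in> {0::nat,1,2,3}" if "p < n" for p
        using rv[OF that] by (cases "p = 0") auto
      have "set (map (\<lambda>p. r (sig n (pk n) p) + (if p = 0 then 2 else 0)) [0..<n]) \<subseteq> {0::nat,1,2,3}"
        unfolding set_map set_upt by (rule image_subsetI, rule fv) simp
      then show ?thesis by (auto simp: adv2_def)
    qed
    ultimately show ?thesis using False by (auto simp: D_def)
  qed
  show ?thesis unfolding RFA_Rn_def
  proof (intro CollectI conjI exI[of _ "xm h2"] exI[of _ "1/3"] exI[of _ "{0,1,2,3}"] exI[of _ D] ballI allI)
    show "L2of pk \<subseteq> lists {0,1}" unfolding L2of_def by auto
    show "rfa ({0,1} \<times> {0,1,2,3}) (xm h2)" by (rule xm_rfa)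
    show "set_pmf (D n) \<subseteq> {y. length y = n \<and> set y \<subseteq> {0,1,2,3}}" for n by (rule setD)
    fix x :: "nat list" assume x: "x \<in> lists {0,1}"
    define n where "n = length x"
    show "measure_pmf.prob (D (length x)) {y. dfa_accepts (xm h2) (zip x y) \<longleftrightarrow> x \<in> L2of pk} \<ge> 1 - 1/3"
    proof (cases "n = 0")
      case True
      then have "x = []" unfolding n_def by simp
      then show ?thesis by (simp add: D_def L2of_def dfa_accepts_def xm_def)
    next
      case False
      have bdn: "\<forall>j. j < n div 2 \<longrightarrow> pk n j < n" using bd by auto
      define fp where "fp = (\<lambda>r::nat\<Rightarrow>nat. \<Sum>p\<in>{..<n}. x!p * r (sig n (pk n) p))"
      have memL: "x \<in> L2of pk \<longleftrightarrow> good2 n (pk n) x" using x False unfolding L2of_def n_def by auto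
      have cases: "(good2 n (pk n) x \<and> (\<forall>r\<in>B n. even (fp r))) \<or>
                   (\<not> good2 n (pk n) x \<and> card {r\<in>B n. \<not> even (fp r)} * 2 = card (B n))"
      proof (cases "good2 n (pk n) x")
        case True
        then have "\<forall>r. even (fp r)" unfolding fp_def good2_def cls_def
          by (intro allI fp_caseA) auto
        then show ?thesis using True by auto
      next
        case False
        then obtain i where i: "odd (cls n (pk n) x i)" unfolding good2_def by auto
        have "card {r\<in>B n. odd (fp r)} * 2 = card (B n)"
          unfolding fp_def B_def
          by (rule fp_caseB[where i=i]) (use i sig_bound[OF bdn] in \<open>auto simp: cls_def\<close>)
        then show ?thesis using False by auto
      qed
      have "measure_pmf.prob (map_pmf (adv2 n (pk n)) (pmf_of_set ({0,1,2::nat} \<times> B n)))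
           {y. dfa_accepts (xm h2) (zip x y) \<longleftrightarrow> good2 n (pk n) x} \<ge> 1 - 1/3"
      proof (rule prob_lemma[OF finB neB _ cases])
        fix a r assume "a \<in> {0::nat,1,2}" "r \<in> B n"
        then show "dfa_accepts (xm h2) (zip x (adv2 n (pk n) (a, r))) \<longleftrightarrow> (a \<noteq> 0 \<and> even (fp r))"
          unfolding fp_def using acc2[OF bdn _ n_def[symmetric]] False unfolding B_def by auto
      qed
      then show ?thesis using False unfolding D_def n_def[symmetric] memL by simp
    qed
  qed simp_all
qed




definition Pi2 :: "nat \<Rightarrow> (nat \<Rightarrow> nat) set" where
  "Pi2 n = PiE {..<n div 2} (\<lambda>_. {..<n div 2})"
definition Fam :: "nat \<Rightarrow> (nat \<Rightarrow> nat) \<Rightarrow> nat list set" where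
  "Fam n \<pi> = {x \<in> lists {0,1}. length x = n \<and> 0 < n \<and> good2 n \<pi> x}"
definition sl :: "(nat \<times> nat) pda \<Rightarrow> nat \<Rightarrow> nat list \<Rightarrow> nat list set" where
  "sl M n w = {x \<in> lists {0,1}. length x = n \<and> pda_accepts M (zip x w)}"
definition Real :: "(nat \<times> nat) pda \<times> nat set \<Rightarrow> nat \<Rightarrow> nat list set set" where
  "Real e n = (\<lambda>w. sl (fst e) n w) ` {w. set w \<subseteq> snd e \<and> length w = n}"
definition E :: "nat \<Rightarrow> (nat \<times> nat) pda \<times> nat set" where
  "E i = from_nat_into Mach i"
definition pick :: "nat \<Rightarrow> nat \<Rightarrow> nat" where
  "pick n = (if \<exists>\<pi>\<in>Pi2 n. Fam n \<pi> \<notin> Real (E (fst (prod_decode n))) n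
     then (SOME \<pi>. \<pi> \<in> Pi2 n \<and> Fam n \<pi> \<notin> Real (E (fst (prod_decode n))) n) else (\<lambda>_. 0))"

lemma pick_bd: "\<forall>n j. j < n div 2 \<longrightarrow> pick n j < n"
proof (intro allI impI)
  fix n j :: nat assume j: "j < n div 2"
  show "pick n j < n"
  proof (cases "\<exists>\<pi>\<in>Pi2 n. Fam n \<pi> \<notin> Real (E (fst (prod_decode n))) n")
    case True
    then have "pick n \<in> Pi2 n" unfolding pick_def
      by simp (metis (mono_tags, lifting) someI_ex)
    then have "pick n j < n div 2" using j unfolding Pi2_def by (auto simp: PiE_iff)
    moreover have "n div 2 \<le> n" by simp
    ultimately show ?thesis by linarith
  next
    case False then show ?thesis using j unfolding pick_def by simp
  qed
qed

lemma cls_two: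
  assumes ab: "a < n" "b < n" "a \<noteq> b"
    and x: "\<And>p. p < n \<Longrightarrow> x ! p = (if p = a then 1 else 0) + (if p = b then 1 else 0)"
  shows "cls n \<rho> x i = (if sig n \<rho> a = i then 1 else 0) + (if sig n \<rho> b = i then 1 else 0)"
proof -
  define S where "S = {p\<in>{..<n}. sig n \<rho> p = i}"
  have fS: "finite S" unfolding S_def by auto
  have "cls n \<rho> x i = (\<Sum>p\<in>S. (if p = a then 1 else 0) + (if p = b then 1 else 0))"
    unfolding cls_def S_def[symmetric] by (rule sum.cong) (auto simp: S_def x)
  also have "\<dots> = (\<Sum>p\<in>S. (if p = a then 1 else 0)) + (\<Sum>p\<in>S. (if p = b then 1 else 0))"
    by (rule sum.distrib)
  also have "\<dots> = (if a \<in> S then 1 else 0) + (if b \<in> S then 1 else 0)"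
    using fS by (simp add: sum.delta)
  finally show ?thesis using ab unfolding S_def by simp
qed

lemma Fam_inj: "inj_on (Fam n) (Pi2 n)"
proof (rule inj_onI, rule ccontr)
  fix \<pi> \<pi>' assume p: "\<pi> \<in> Pi2 n" and p': "\<pi>' \<in> Pi2 n" and eq: "Fam n \<pi> = Fam n \<pi>'" and ne: "\<pi> \<noteq> \<pi>'"
  define m where "m = n div 2"
  obtain j where j: "j < m" "\<pi> j \<noteq> \<pi>' j"
  proof -
    have "\<exists>j<m. \<pi> j \<noteq> \<pi>' j"
    proof (rule ccontr)
      assume "\<not> (\<exists>j<m. \<pi> j \<noteq> \<pi>' j)"
      then have "\<pi> = \<pi>'" using p p' unfolding Pi2_def m_def
        by (intro ext) (metis PiE_arb lessThan_iff)
      then show False using ne by simp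
    qed
    then show ?thesis using that by blast
  qed
  define a where "a = \<pi> j"
  define b where "b = m + j"
  have am: "a < m" using p j unfolding a_def Pi2_def m_def by (auto simp: PiE_iff)
  have ab: "a < n" "b < n" "a \<noteq> b" using am j unfolding b_def m_def by auto
  define x where "x = map (\<lambda>p. (if p = a then 1 else 0) + (if p = b then 1 else (0::nat))) [0..<n]"
  have xp: "x ! p = (if p = a then 1 else 0) + (if p = b then 1 else 0)" if "p < n" for p
    using that unfolding x_def by simp
  have xl: "x \<in> lists {0,1}" "length x = n" "0 < n" using ab unfolding x_def by (auto split: if_splits)
  have sa: "sig n \<rho> a = a" for \<rho> using am unfolding sig_def m_def by auto
  have sb: "sig n \<rho> b = \<rho> j" for \<rho> using j unfolding sig_def m_def b_def by auto
  have "good2 n \<pi> x" unfolding good2_def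
    using cls_two[OF ab xp] sa sb unfolding a_def by auto
  then have "x \<in> Fam n \<pi>" using xl unfolding Fam_def by auto
  moreover have "\<not> good2 n \<pi>' x" unfolding good2_def
  proof
    assume "\<forall>i. even (cls n \<pi>' x i)"
    then have "even (cls n \<pi>' x a)" by simp
    then show False using cls_two[OF ab xp, of "\<pi>'" a] sa sb j(2) unfolding a_def by simp
  qed
  then have "x \<notin> Fam n \<pi>'" unfolding Fam_def by auto
  ultimately show False using eq by simp
qed

lemma card_Fam: "card (Fam n ` Pi2 n) = (n div 2) ^ (n div 2)"
proof -
  have "card (Fam n ` Pi2 n) = card (Pi2 n)" by (rule card_image[OF Fam_inj])
  then show ?thesis unfolding Pi2_def by (simp add: card_PiE)
qed

lemma Real_card: assumes "finite (snd e)"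
  shows "finite (Real e n)" "card (Real e n) \<le> card (snd e) ^ n"
proof -
  have f: "finite {w. set w \<subseteq> snd e \<and> length w = n}"
    using assms by (rule finite_lists_length_eq)
  show "finite (Real e n)" unfolding Real_def using f by simp
  have "card (Real e n) \<le> card {w. set w \<subseteq> snd e \<and> length w = n}"
    unfolding Real_def by (rule card_image_le[OF f])
  also have "\<dots> = card (snd e) ^ n" using card_lists_length_eq[OF assms] .
  finally show "card (Real e n) \<le> card (snd e) ^ n" .
qed

lemma L2_notCFL: "L2of pick \<notin> CFL_n {0,1}"
proof
  assume "L2of pick \<in> CFL_n {0,1}"
  then have "\<exists>(M :: (nat \<times> nat) pda) \<Gamma> h. finite \<Gamma> \<and> pda ({0,1} \<times> \<Gamma>) M \<and> advice_fun \<Gamma> h \<and>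
     (\<forall>x\<in>lists {0,1}. x \<in> L2of pick \<longleftrightarrow> pda_accepts M (zip x (h (length x))))"
    unfolding CFL_n_def by simp
  then obtain M \<Gamma> h where "finite \<Gamma> \<and> pda ({0,1} \<times> \<Gamma>) M \<and> advice_fun \<Gamma> h \<and>
     (\<forall>x\<in>lists {0,1}. x \<in> L2of pick \<longleftrightarrow> pda_accepts M (zip x (h (length x))))"
    by (elim exE)
  then have fin: "finite \<Gamma>" and pd: "pda ({0,1} \<times> \<Gamma>) M" and adv: "advice_fun \<Gamma> h"
    and acc: "\<forall>x\<in>lists {0,1}. x \<in> L2of pick \<longleftrightarrow> pda_accepts M (zip x (h (length x)))"
    by auto
  have "(M, \<Gamma>) \<in> Mach" unfolding Mach_def using fin pd by simp
  then obtain i where i: "E i = (M, \<Gamma>)" unfolding E_def using from_nat_into_surj[OF countable_Mach] by blast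
  obtain N where N: "\<forall>n\<ge>N. card \<Gamma> ^ n < (n div 2) ^ (n div 2)" using growth by blast
  define n where "n = prod_encode (i, N)"
  have nN: "n \<ge> N" unfolding n_def by (rule le_prod_encode_2)
  have dec: "fst (prod_decode n) = i" unfolding n_def by simp
  have "card (Real (M, \<Gamma>) n) < card (Fam n ` Pi2 n)"
    using Real_card(2)[of "(M,\<Gamma>)" n] fin N nN card_Fam[of n] by fastforce
  then have ex: "\<exists>\<pi>\<in>Pi2 n. Fam n \<pi> \<notin> Real (M, \<Gamma>) n"
  proof (rule contrapos_pp)
    assume "\<not> (\<exists>\<pi>\<in>Pi2 n. Fam n \<pi> \<notin> Real (M, \<Gamma>) n)"
    then have "Fam n ` Pi2 n \<subseteq> Real (M, \<Gamma>) n" by auto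
    then have "card (Fam n ` Pi2 n) \<le> card (Real (M, \<Gamma>) n)"
      using Real_card(1)[of "(M,\<Gamma>)" n] fin by (intro card_mono) auto
    then show "\<not> card (Real (M, \<Gamma>) n) < card (Fam n ` Pi2 n)" by simp
  qed
  then have "Fam n (pick n) \<notin> Real (M, \<Gamma>) n"
    unfolding pick_def dec i by simp (metis (mono_tags, lifting) someI_ex)
  moreover have "Fam n (pick n) = sl M n (h n)"
  proof -
    have "x \<in> Fam n (pick n) \<longleftrightarrow> x \<in> sl M n (h n)" for x
    proof (cases "x \<in> lists {0,1} \<and> length x = n")
      case True
      then show ?thesis using acc unfolding Fam_def sl_def L2of_def by auto
    next
      case False
      then show ?thesis unfolding Fam_def sl_def by auto
    qed
    then show ?thesis by (rule set_eqI)
  qed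
  moreover have "h n \<in> {w. set w \<subseteq> \<Gamma> \<and> length w = n}" using adv unfolding advice_fun_def by auto
  ultimately show False unfolding Real_def by auto
qed




definition L1 :: "nat list set" where
  "L1 = {x. \<exists>u\<in>lists {0,1}. x = u @ 2 # rev u}"

lemma L1_char: "x \<in> L1 \<longleftrightarrow> (\<exists>m. length x = 2*m+1 \<and> x!m = 2 \<and> (\<forall>p<length x. p \<noteq> m \<longrightarrow> x!p \<in> {0,1})
   \<and> (\<forall>i<m. x!i = x!(2*m-i)))"
proof
  assume "x \<in> L1"
  then obtain u where u: "u \<in> lists {0,1}" "x = u @ 2 # rev u" unfolding L1_def by blast
  define m where "m = length u"
  have len: "length x = 2*m+1" using u unfolding m_def by simp
  have a: "x!p = u!p" if "p < m" for p using that u unfolding m_def by (simp add: nth_append)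
  have b: "x!m = 2" using u unfolding m_def by (simp add: nth_append)
  have c: "x!p = u!(2*m-p)" if "m < p" "p < 2*m+1" for p
    using that u unfolding m_def by (simp add: nth_append rev_nth mult_2)
  have uv: "u!p \<in> {0,1}" if "p < m" for p using u that unfolding m_def by auto
  show "\<exists>m. length x = 2*m+1 \<and> x!m = 2 \<and> (\<forall>p<length x. p \<noteq> m \<longrightarrow> x!p \<in> {0,1})
     \<and> (\<forall>i<m. x!i = x!(2*m-i))"
  proof (intro exI conjI allI impI)
    show "length x = 2*m+1" by (rule len)
    show "x!m = 2" by (rule b)
    fix p assume "p < length x" "p \<noteq> m"
    note pp = this
    show "x!p \<in> {0,1}"
    proof (cases "p < m")
      case True then show ?thesis using a uv by simp
    next
      case False
      then have "m < p" "p < 2*m+1" using pp len by auto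
      moreover have "2*m - p < m" using \<open>m < p\<close> \<open>p < 2*m+1\<close> by arith
      ultimately show ?thesis using c uv by simp
    qed
  next
    fix i assume "i < m"
    then show "x!i = x!(2*m-i)" using a c by simp
  qed
next
  assume "\<exists>m. length x = 2*m+1 \<and> x!m = 2 \<and> (\<forall>p<length x. p \<noteq> m \<longrightarrow> x!p \<in> {0,1})
   \<and> (\<forall>i<m. x!i = x!(2*m-i))"
  then obtain m where len: "length x = 2*m+1" and b: "x!m = 2"
    and v: "\<forall>p<length x. p \<noteq> m \<longrightarrow> x!p \<in> {0,1}" and s: "\<forall>i<m. x!i = x!(2*m-i)" by blast
  define u where "u = take m x"
  have "u \<in> lists {0,1}"
  proof -
    have "set u \<subseteq> {0,1}"
    proof
      fix z assume "z \<in> set u"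
      then obtain p where "p < length u" "u!p = z" by (auto simp: in_set_conv_nth)
      then have "p < m" "x!p = z" using len unfolding u_def by auto
      moreover have "p < length x" "p \<noteq> m" using \<open>p < m\<close> len by auto
      ultimately show "z \<in> {0,1}" using v by (metis (no_types))
    qed
    then show ?thesis by auto
  qed
  moreover have "x = u @ 2 # rev u"
  proof (rule nth_equalityI)
    show "length x = length (u @ 2 # rev u)" using len unfolding u_def by simp
    fix p assume p: "p < length x"
    consider "p < m" | "p = m" | "m < p" by linarith
    then show "x!p = (u @ 2 # rev u)!p"
    proof cases
      case 1 then show ?thesis unfolding u_def using len by (simp add: nth_append)
    next
      case 2 then show ?thesis unfolding u_def using len b by (simp add: nth_append)
    next
      case 3
      have lu: "length u = m" using len unfolding u_def by simp
      have "(u @ 2 # rev u)!p = (rev u)!(p - m - 1)" using 3 lu by (simp add: nth_append)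
      also have "\<dots> = u!(2*m - p)" using 3 p len lu by (simp add: rev_nth mult_2)
      also have "\<dots> = x!(2*m-p)" unfolding u_def using 3 p len by simp
      also have "\<dots> = x!p" using s[rule_format, of "2*m-p"] 3 p len by simp
      finally show ?thesis by simp
    qed
  qed
  ultimately show "x \<in> L1" unfolding L1_def by blast
qed




lemma dfa_foldl_in: "dfa A M \<Longrightarrow> q \<in> d_states M \<Longrightarrow> set zs \<subseteq> A \<Longrightarrow> foldl (d_delta M) q zs \<in> d_states M"
  by (induction zs arbitrary: q) (auto simp: dfa_def)

lemma L1_notREG: "L1 \<notin> REG_n {0,1,2}"
proof
  assume "L1 \<in> REG_n {0,1,2}"
  then have "\<exists>(M :: (nat \<times> nat) dfa) \<Gamma> h. finite \<Gamma> \<and> dfa ({0,1,2} \<times> \<Gamma>) M \<and> advice_fun \<Gamma> h \<and>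
     (\<forall>x\<in>lists {0,1,2}. x \<in> L1 \<longleftrightarrow> dfa_accepts M (zip x (h (length x))))"
    unfolding REG_n_def by simp
  then obtain M \<Gamma> h where "finite \<Gamma> \<and> dfa ({0,1,2} \<times> \<Gamma>) M \<and> advice_fun \<Gamma> h \<and>
     (\<forall>x\<in>lists {0,1,2}. x \<in> L1 \<longleftrightarrow> dfa_accepts M (zip x (h (length x))))"
    by (elim exE)
  then have fin: "finite \<Gamma>" and df: "dfa ({0,1,2} \<times> \<Gamma>) M" and adv: "advice_fun \<Gamma> h"
    and acc: "\<forall>x\<in>lists {0,1,2}. x \<in> L1 \<longleftrightarrow> dfa_accepts M (zip x (h (length x)))"
    by auto
  define m where "m = card (d_states M)"
  define n where "n = 2*m+1"
  define a where "a = h n"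
  have la: "length a = n" "set a \<subseteq> \<Gamma>" using adv unfolding a_def advice_fun_def by auto
  define U where "U = {u. set u \<subseteq> {0::nat,1} \<and> length u = m}"
  define f where "f = (\<lambda>u. foldl (d_delta M) (d_init M) (zip u (take m a)))"
  have cU: "card U = 2 ^ m" unfolding U_def using card_lists_length_eq[of "{0::nat,1}" m] by (simp add: numeral_2_eq_2)
  have fin_st: "finite (d_states M)" using df unfolding dfa_def by simp
  have fU: "f ` U \<subseteq> d_states M"
  proof
    fix q assume "q \<in> f ` U"
    then obtain u where u: "u \<in> U" "q = f u" by blast
    have "set (zip u (take m a)) \<subseteq> {0,1,2} \<times> \<Gamma>"
    proof
      fix z assume z: "z \<in> set (zip u (take m a))"
      obtain z1 z2 where zz: "z = (z1, z2)" by fastforce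
      have "z1 \<in> set u" "z2 \<in> set (take m a)"
        using z unfolding zz by (auto dest: set_zip_leftD set_zip_rightD)
      then have "fst z \<in> set u" "snd z \<in> set (take m a)" unfolding zz by auto
      then show "z \<in> {0,1,2} \<times> \<Gamma>" using u la set_take_subset[of m a] unfolding U_def
        by (cases z) auto
    qed
    moreover have "d_init M \<in> d_states M" using df unfolding dfa_def by simp
    ultimately show "q \<in> d_states M" unfolding u f_def by (intro dfa_foldl_in[OF df])
  qed
  have "\<not> inj_on f U"
  proof
    assume "inj_on f U"
    then have "card U \<le> card (d_states M)" using card_inj_on_le[OF _ fU fin_st] by blast
    then show False using cU less_exp[of m] unfolding m_def by simp
  qed
  then obtain u u' where uu: "u \<in> U" "u' \<in> U" "u \<noteq> u'" "f u = f u'"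
    unfolding inj_on_def by blast
  define x1 where "x1 = u @ 2 # rev u"
  define x2 where "x2 = u' @ 2 # rev u"
  have lu: "length u = m" "length u' = m" "set u \<subseteq> {0,1}" "set u' \<subseteq> {0,1}" using uu unfolding U_def by auto
  have x1L: "x1 \<in> L1" unfolding x1_def L1_def using lu by auto
  have x2L: "x2 \<notin> L1"
  proof
    assume "x2 \<in> L1"
    then obtain v where v: "v \<in> lists {0,1}" "x2 = v @ 2 # rev v" unfolding L1_def by blast
    have lv: "length v = m" using arg_cong[OF v(2), of length] lu unfolding x2_def by simp
    have "u' = v" using arg_cong[OF v(2), of "take m"] lu lv unfolding x2_def by simp
    moreover have "rev u = rev v" using arg_cong[OF v(2), of "drop (Suc m)"] lu lv unfolding x2_def by simp
    ultimately show False using uu by simp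
  qed
  have ls: "x1 \<in> lists {0,1,2}" "x2 \<in> lists {0,1,2}" "length x1 = n" "length x2 = n"
    using lu unfolding x1_def x2_def n_def by auto
  have e1: "dfa_accepts M (zip x1 a) = (foldl (d_delta M) (f u) (zip (2 # rev u) (drop m a)) \<in> d_final M)"
    unfolding dfa_accepts_def x1_def zip_append1 foldl_append f_def using lu by simp
  have e2: "dfa_accepts M (zip x2 a) = (foldl (d_delta M) (f u') (zip (2 # rev u) (drop m a)) \<in> d_final M)"
    unfolding dfa_accepts_def x2_def zip_append1 foldl_append f_def using lu by simp
  show False using acc ls x1L x2L e1 e2 uu(4) unfolding a_def by metis
qed




definition sg1 :: "nat \<Rightarrow> nat \<times> nat \<Rightarrow> nat" where
  "sg1 n k = (if snd k = 0 then min (fst k) (n - 1 - fst k) else n + fst k)"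
definition C1 :: "nat \<Rightarrow> nat list \<Rightarrow> nat \<times> nat \<Rightarrow> nat" where
  "C1 n x k = (if snd k = 0 then (if x ! fst k = 1 then 1 else 0)
      else (if (x ! fst k = 2) = (fst k = n div 2) then 0 else 1))"
definition K1 :: "nat \<Rightarrow> (nat \<times> nat) set" where "K1 n = {..<n} \<times> {0,1}"
definition h1 :: "nat \<Rightarrow> nat \<Rightarrow> nat" where
  "h1 s g = (g mod 2) * (if s = 1 then 1 else 0) + ((g div 2) mod 2) * (if (s = 2) = ((g div 4) mod 2 = 1) then 0 else 1) + g div 8"
definition adv1 :: "nat \<Rightarrow> nat \<times> (nat \<Rightarrow> nat) \<Rightarrow> nat list" where
  "adv1 n ar = (if fst ar = 0 then replicate n 0 else
     map (\<lambda>p. snd ar (min p (n-1-p)) + 2 * snd ar (n+p) + 4 * (if p = n div 2 then 1 else 0)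
        + 8 * (if p = 0 then 1 else 0)) [0..<n])"

lemma h1_val:
  assumes "r1 \<in> {0,1}" "r2 \<in> {0,1}" "c \<in> {0,1}" "f \<in> {0,1}"
  shows "h1 s (r1 + 2*r2 + 4*c + 8*f) = r1 * (if s = 1 then 1 else 0) + r2 * (if (s = 2) = (c = 1) then 0 else 1) + f"
  using assms apply (simp only: insert_iff empty_iff)
  apply (elim disjE)
  apply (simp_all add: h1_def)
  done

lemma h1_zero: "h1 s 0 = 0" by (simp add: h1_def)

lemma sum_K1: "(\<Sum>k\<in>K1 n. g k) = (\<Sum>p<n. g (p,0) + g (p,1))"
proof -
  have "(\<Sum>k\<in>K1 n. g k) = (\<Sum>(p,b)\<in>{..<n}\<times>{0::nat,1}. g (p,b))" unfolding K1_def by simp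
  also have "\<dots> = (\<Sum>p<n. \<Sum>b\<in>{0::nat,1}. g (p,b))" by (rule sum.cartesian_product[symmetric])
  also have "\<dots> = (\<Sum>p<n. g (p,0) + g (p,1))" by simp
  finally show ?thesis .
qed

lemma acc1:
  assumes n: "0 < n" and x: "length x = n" and r: "r \<in> PiE {..<2*n} (\<lambda>_. {0::nat,1})"
  shows "dfa_accepts (xm h1) (zip x (adv1 n (a,r))) \<longleftrightarrow>
     (a \<noteq> 0 \<and> even (\<Sum>k\<in>K1 n. C1 n x k * r (sg1 n k)))"
proof -
  have len: "length x = length (adv1 n (a,r))" using x by (simp add: adv1_def)
  show ?thesis
  proof (cases "a = 0")
    case True
    then show ?thesis unfolding xm_accepts[OF len] by (simp add: adv1_def h1_zero x)
  next
    case False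
    have rv: "r q \<in> {0,1}" if "q < 2*n" for q using r that by (auto simp: PiE_iff)
    have tm: "h1 (x!p) (adv1 n (a,r) ! p) =
       (C1 n x (p,0) * r (sg1 n (p,0)) + C1 n x (p,1) * r (sg1 n (p,1))) + (if p = 0 then 1 else 0)"
      if "p < n" for p
    proof -
      have "h1 (x!p) (adv1 n (a,r) ! p) = h1 (x!p) (r (min p (n-1-p)) + 2 * r (n+p)
          + 4 * (if p = n div 2 then 1 else 0) + 8 * (if p = 0 then 1 else 0))"
        using that False by (simp add: adv1_def)
      also have "\<dots> = r (min p (n-1-p)) * (if x!p = 1 then 1 else 0)
          + r (n+p) * (if (x!p = 2) = ((if p = n div 2 then 1 else 0) = (1::nat)) then 0 else 1)
          + (if p = 0 then 1 else 0)"
      proof (rule h1_val)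
        show "r (min p (n-1-p)) \<in> {0,1}" using rv[of "min p (n-1-p)"] that by simp
        show "r (n+p) \<in> {0,1}" using rv[of "n+p"] that by simp
      qed simp_all
      also have "((if p = n div 2 then 1 else 0) = (1::nat)) = (p = n div 2)" by simp
      finally have eq: "h1 (x!p) (adv1 n (a,r) ! p) = r (min p (n-1-p)) * (if x!p = 1 then 1 else 0)
          + r (n+p) * (if (x!p = 2) = (p = n div 2) then 0 else 1) + (if p = 0 then 1 else 0)" .
      have c0: "C1 n x (p,0) = (if x!p = 1 then 1 else 0)" by (simp add: C1_def)
      have c1: "C1 n x (p,1) = (if (x!p = 2) = (p = n div 2) then 0 else 1)" by (simp add: C1_def)
      have s0: "sg1 n (p,0) = min p (n-1-p)" by (simp add: sg1_def)
      have s1: "sg1 n (p,1) = n+p" by (simp add: sg1_def)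
      show ?thesis unfolding eq c0 c1 s0 s1 by (simp only: mult.commute)
    qed
    have "(\<Sum>p<length x. h1 (x!p) (adv1 n (a,r) ! p)) =
        (\<Sum>k\<in>K1 n. C1 n x k * r (sg1 n k)) + (\<Sum>p<n. (if p = 0 then 1 else 0))"
      unfolding x sum_K1 by (simp add: tm sum.distrib)
    also have "(\<Sum>p<n. (if p = 0 then 1 else 0)::nat) = 1" using n by simp
    finally show ?thesis unfolding xm_accepts[OF len] using False by simp
  qed
qed

lemma cls1_set:
  assumes "n = 2*m+1"
  shows "{k\<in>K1 n. sg1 n k = i} = (if i < m then {(i,0),(n-1-i,0)} else if i = m then {(m,0)}
      else if n \<le> i \<and> i < 2*n then {(i-n,1)} else {})"
  using assms unfolding K1_def sg1_def by (auto split: if_splits)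

definition good1 :: "nat \<Rightarrow> nat list \<Rightarrow> bool" where
  "good1 n x \<longleftrightarrow> (\<forall>i. even (\<Sum>k\<in>{k\<in>K1 n. sg1 n k = i}. C1 n x k))"

lemma cls1_val:
  assumes "n = 2*m+1"
  shows "(\<Sum>k\<in>{k\<in>K1 n. sg1 n k = i}. C1 n x k) = (if i < m then C1 n x (i,0) + C1 n x (n-1-i,0)
     else if i = m then C1 n x (m,0) else if n \<le> i \<and> i < 2*n then C1 n x (i-n,1) else 0)"
  unfolding cls1_set[OF assms] using assms by auto




lemma good1_iff:
  assumes x: "x \<in> lists {0,1,2}" and len: "length x = n" and n: "n = 2*m+1"
  shows "good1 n x \<longleftrightarrow> x \<in> L1"
proof -
  have nd: "n div 2 = m" using n by simp
  have c0: "C1 n x (p,0) = (if x!p = 1 then 1 else 0)" for p by (simp add: C1_def)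
  have c1: "C1 n x (p,1) = (if (x!p = 2) = (p = m) then 0 else 1)" for p by (simp add: C1_def nd)
  have xs: "set x \<subseteq> {0,1,2}" using x by (simp only: lists_eq_set mem_Collect_eq)
  have xv: "x!p \<in> {0,1,2}" if "p < n" for p using xs nth_mem[of p x] len that by blast
  show ?thesis
  proof
    assume g: "good1 n x"
    have h2: "(x!p = 2) = (p = m)" if "p < n" for p
    proof -
      have "even (\<Sum>k\<in>{k\<in>K1 n. sg1 n k = n+p}. C1 n x k)" using g unfolding good1_def by blast
      then have "even (C1 n x (p,1))" unfolding cls1_val[OF n] using that n by simp
      then show ?thesis unfolding c1 by (auto split: if_splits)
    qed
    have hp: "(x!i = 1) = (x!(2*m-i) = 1)" if "i < m" for i
    proof -
      have "even (\<Sum>k\<in>{k\<in>K1 n. sg1 n k = i}. C1 n x k)" using g unfolding good1_def by blast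
      then have "even (C1 n x (i,0) + C1 n x (n-1-i,0))" unfolding cls1_val[OF n] using that by simp
      moreover have "n - 1 - i = 2*m - i" using n by simp
      ultimately show ?thesis unfolding c0 by (auto split: if_splits)
    qed
    show "x \<in> L1" unfolding L1_char
    proof (intro exI conjI allI impI)
      show "length x = 2*m+1" using len n by simp
      show "x!m = 2" using h2[of m] n by simp
      fix p assume "p < length x" "p \<noteq> m"
      then show "x!p \<in> {0,1}" using h2[of p] xv[of p] len by auto
    next
      fix i assume i: "i < m"
      have a: "x!i \<in> {0,1}" using h2[of i] xv[of i] i n by auto
      have j: "2*m - i < n" "2*m - i \<noteq> m" using i n by auto
      have b: "x!(2*m-i) \<in> {0,1}" using h2[OF j(1)] xv[OF j(1)] j(2) by auto
      show "x!i = x!(2*m-i)" using a b hp[OF i] by auto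
    qed
  next
    assume "x \<in> L1"
    then obtain m' where m': "length x = 2*m'+1" "x!m' = 2" "\<forall>p<length x. p \<noteq> m' \<longrightarrow> x!p \<in> {0,1}"
      "\<forall>i<m'. x!i = x!(2*m'-i)" unfolding L1_char by blast
    have mm: "m' = m" using m'(1) len n by simp
    show "good1 n x" unfolding good1_def
    proof
      fix i
      show "even (\<Sum>k\<in>{k\<in>K1 n. sg1 n k = i}. C1 n x k)"
      proof (cases "i < m")
        case True
        have "n - 1 - i = 2*m - i" using n by simp
        moreover have "x!i = x!(2*m-i)" using True m'(4) mm by simp
        ultimately show ?thesis unfolding cls1_val[OF n] c0 using True by simp
      next
        case False
        show ?thesis
        proof (cases "i = m")
          case True then show ?thesis unfolding cls1_val[OF n] using m'(2) mm c0 by simp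
        next
          case False2: False
          show ?thesis
          proof (cases "n \<le> i \<and> i < 2*n")
            case True
            have "(x!(i-n) = 2) = (i - n = m)"
            proof (cases "i - n = m")
              case True then show ?thesis using m'(2) mm by simp
            next
              case F: False
              have "i - n < length x" using True len n by arith
              then have "x!(i-n) \<in> {0,1}" using m'(3) F mm by blast
              then show ?thesis using F by auto
            qed
            then show ?thesis unfolding cls1_val[OF n] using True False False2 c1 by simp
          next
            case False3: False
            then show ?thesis unfolding cls1_val[OF n] using False False2 by auto
          qed
        qed
      qed
    qed
  qed
qed




lemma sg1_bound: "k \<in> K1 n \<Longrightarrow> sg1 n k < 2*n"
  unfolding K1_def sg1_def by auto

lemma L1_sub: "L1 \<subseteq> lists {0,1,2}"
  unfolding L1_def by auto

lemma L1_odd: "x \<in> L1 \<Longrightarrow> odd (length x)"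
  unfolding L1_def by auto

lemma L1_RFA: "L1 \<in> RFA_Rn {0,1,2}"
proof -
  define B where "B = (\<lambda>n::nat. PiE {..<2*n} (\<lambda>_. {0::nat,1}))"
  define D where "D = (\<lambda>n. if even n then return_pmf (replicate n 0)
     else map_pmf (adv1 n) (pmf_of_set ({0,1,2::nat} \<times> B n)))"
  have finB: "finite (B n)" for n unfolding B_def by (auto intro: finite_PiE)
  have neB: "B n \<noteq> {}" for n unfolding B_def by (simp add: PiE_eq_empty_iff)
  have setD: "set_pmf (D n) \<subseteq> {y. length y = n \<and> set y \<subseteq> {0..<16}}" for n
  proof (cases "even n")
    case True
    have "set (replicate n (0::nat)) \<subseteq> {0..<16}" by (cases n) auto
    then show ?thesis using True by (simp add: D_def)
  next
    case False
    have "set_pmf (pmf_of_set ({0,1,2::nat} \<times> B n)) = {0,1,2} \<times> B n"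
      using finB neB by (intro set_pmf_of_set) auto
    moreover have "adv1 n (a,r) \<in> {y. length y = n \<and> set y \<subseteq> {0..<16}}" if "r \<in> B n" for a r
    proof -
      have rv: "r q \<in> {0,1}" if "q < 2*n" for q
        using \<open>r \<in> B n\<close> that unfolding B_def by (auto simp: PiE_iff)
      have fv: "r (min p (n-1-p)) + 2 * r (n+p) + 4 * (if p = n div 2 then 1 else 0)
          + 8 * (if p = 0 then 1 else 0) \<in> {0::nat..<16}" if "p < n" for p
      proof -
        have "min p (n-1-p) < 2*n" "n+p < 2*n" using that by auto
        then have "r (min p (n-1-p)) \<le> 1" "r (n+p) \<le> 1" using rv by fastforce+
        then show ?thesis by auto
      qed
      have "set (map (\<lambda>p. r (min p (n-1-p)) + 2 * r (n+p) + 4 * (if p = n div 2 then 1 else 0)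
          + 8 * (if p = 0 then 1 else 0)) [0..<n]) \<subseteq> {0::nat..<16}"
        unfolding set_map set_upt by (rule image_subsetI, rule fv) simp
      then show ?thesis by (auto simp: adv1_def)
    qed
    ultimately show ?thesis using False by (auto simp: D_def)
  qed
  show ?thesis unfolding RFA_Rn_def
  proof (intro CollectI conjI exI[of _ "xm h1"] exI[of _ "1/3"] exI[of _ "{0..<16}"] exI[of _ D] ballI allI)
    show "L1 \<subseteq> lists {0,1,2}" by (rule L1_sub)
    show "rfa ({0,1,2} \<times> {0..<16}) (xm h1)" by (rule xm_rfa)
    show "set_pmf (D n) \<subseteq> {y. length y = n \<and> set y \<subseteq> {0..<16}}" for n by (rule setD)
    fix x :: "nat list" assume x: "x \<in> lists {0,1,2}"
    define n where "n = length x"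
    show "measure_pmf.prob (D (length x)) {y. dfa_accepts (xm h1) (zip x y) \<longleftrightarrow> x \<in> L1} \<ge> 1 - 1/3"
    proof (cases "even n")
      case True
      have "x \<notin> L1" using L1_odd True unfolding n_def by blast
      moreover have "\<not> dfa_accepts (xm h1) (zip x (replicate n 0))"
        by (subst xm_accepts) (simp_all add: n_def h1_zero)
      ultimately show ?thesis using True unfolding D_def n_def[symmetric] by simp
    next
      case False
      then obtain m where nm: "n = 2*m+1" by (metis oddE)
      define fp where "fp = (\<lambda>r::nat\<Rightarrow>nat. \<Sum>k\<in>K1 n. C1 n x k * r (sg1 n k))"
      have memL: "x \<in> L1 \<longleftrightarrow> good1 n x" using good1_iff[OF x n_def[symmetric] nm] by simp
      have finK: "finite (K1 n)" unfolding K1_def by auto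
      have cases: "(good1 n x \<and> (\<forall>r\<in>B n. even (fp r))) \<or>
                   (\<not> good1 n x \<and> card {r\<in>B n. \<not> even (fp r)} * 2 = card (B n))"
      proof (cases "good1 n x")
        case True
        then have "\<forall>r. even (fp r)" unfolding fp_def good1_def
          by (intro allI fp_caseA[OF finK]) auto
        then show ?thesis using True by auto
      next
        case False
        then obtain i where i: "odd (\<Sum>k\<in>{k\<in>K1 n. sg1 n k = i}. C1 n x k)" unfolding good1_def by auto
        have "card {r\<in>B n. odd (fp r)} * 2 = card (B n)"
          unfolding fp_def B_def
          by (rule fp_caseB[OF finK _ i]) (use sg1_bound in auto)
        then show ?thesis using False by auto
      qed
      have "measure_pmf.prob (map_pmf (adv1 n) (pmf_of_set ({0,1,2::nat} \<times> B n)))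
           {y. dfa_accepts (xm h1) (zip x y) \<longleftrightarrow> good1 n x} \<ge> 1 - 1/3"
      proof (rule prob_lemma[OF finB neB _ cases])
        fix a r assume "a \<in> {0::nat,1,2}" "r \<in> B n"
        then show "dfa_accepts (xm h1) (zip x (adv1 n (a, r))) \<longleftrightarrow> (a \<noteq> 0 \<and> even (fp r))"
          unfolding fp_def using acc1[of n x r a] nm n_def unfolding B_def by auto
      qed
      then show ?thesis using False unfolding D_def n_def[symmetric] memL by simp
    qed
  qed simp_all
qed




definition T1 :: "(nat \<times> nat option \<times> nat \<times> nat \<times> nat list) set" where
  "T1 = (\<lambda>(b,Z). (0, Some b, Z, 0, [b,Z])) ` ({0,1} \<times> {0,1,5})
      \<union> (\<lambda>Z. (0, Some 2, Z, 1, [Z])) ` {0,1,5}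
      \<union> (\<lambda>b. (1, Some b, b, 1, [])) ` {0,1}
      \<union> {(1, None, 5, 2, [5])}"

definition Mp1 :: "nat pda" where
  "Mp1 = \<lparr>p_states = {0,1,2}, p_stack = {0,1,5}, p_init = 0, p_bottom = 5, p_final = {2},
     p_trans = T1\<rparr>"

lemma T1_iff: "(q,a,Z,p,\<alpha>) \<in> T1 \<longleftrightarrow>
    (q = 0 \<and> p = 0 \<and> (\<exists>b. b \<in> {0,1} \<and> a = Some b \<and> Z \<in> {0,1,5} \<and> \<alpha> = [b,Z])) \<or>
    (q = 0 \<and> p = 1 \<and> a = Some 2 \<and> Z \<in> {0,1,5} \<and> \<alpha> = [Z]) \<or>
    (q = 1 \<and> p = 1 \<and> (\<exists>b. b \<in> {0,1} \<and> a = Some b \<and> Z = b \<and> \<alpha> = [])) \<or>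
    (q = 1 \<and> p = 2 \<and> a = None \<and> Z = 5 \<and> \<alpha> = [5])"
  unfolding T1_def image_iff Un_iff singleton_iff Bex_def mem_Sigma_iff
  apply (rule iffI)
  apply (elim disjE exE conjE; simp split: prod.splits)
  apply (elim disjE exE conjE; simp)
  apply force
  done

lemma pt_Mp1: "p_trans Mp1 = T1" unfolding Mp1_def by simp

lemmas trans_Mp1 = T1_iff[folded pt_Mp1]

lemma Mp1_dpda: "dpda {0,1,2} Mp1"
proof -
  have fin: "finite (p_trans Mp1)" unfolding Mp1_def T1_def by simp
  have wf: "\<forall>(q, a, Z, p, \<alpha>) \<in> p_trans Mp1. q \<in> p_states Mp1 \<and> p \<in> p_states Mp1 \<and>
        Z \<in> p_stack Mp1 \<and> set \<alpha> \<subseteq> p_stack Mp1 \<and> (\<forall>b. a = Some b \<longrightarrow> b \<in> {0,1,2})"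
  proof (intro ballI)
    fix t assume "t \<in> p_trans Mp1"
    moreover obtain q a Z p \<alpha> where t: "t = (q, a, Z, p, \<alpha>)" by (cases t) auto
    ultimately have "(q, a, Z, p, \<alpha>) \<in> p_trans Mp1" by simp
    then show "case t of (q, a, Z, p, \<alpha>) \<Rightarrow> q \<in> p_states Mp1 \<and> p \<in> p_states Mp1 \<and>
        Z \<in> p_stack Mp1 \<and> set \<alpha> \<subseteq> p_stack Mp1 \<and> (\<forall>b. a = Some b \<longrightarrow> b \<in> {0,1,2})"
      unfolding t trans_Mp1 by (auto simp: Mp1_def)
  qed
  have pd: "pda {0,1,2} Mp1" unfolding pda_def using fin wf by (simp add: Mp1_def)
  have d1: "\<forall>q a Z p \<alpha> p' \<alpha>'. (q, a, Z, p, \<alpha>) \<in> p_trans Mp1 \<and> (q, a, Z, p', \<alpha>') \<in> p_trans Mp1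
         \<longrightarrow> p = p' \<and> \<alpha> = \<alpha>'"
    unfolding trans_Mp1 by auto
  have d2: "\<forall>q Z p \<alpha> b p' \<alpha>'. (q, None, Z, p, \<alpha>) \<in> p_trans Mp1 \<longrightarrow> (q, Some b, Z, p', \<alpha>') \<notin> p_trans Mp1"
    unfolding trans_Mp1 by auto
  show ?thesis unfolding dpda_def using pd d1 d2 by blast
qed

lemma step_cases:
  assumes "pda_step Mp1 (q,w,s) (p,w',s')"
  shows "(q = 0 \<and> p = 0 \<and> (\<exists>a Z \<gamma>. a \<in> {0,1} \<and> w = a#w' \<and> s = Z#\<gamma> \<and> s' = a#Z#\<gamma>))
       \<or> (q = 0 \<and> p = 1 \<and> w = 2#w' \<and> s' = s)
       \<or> (q = 1 \<and> p = 1 \<and> (\<exists>a. a \<in> {0,1} \<and> w = a#w' \<and> s = a#s'))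
       \<or> (q = 1 \<and> p = 2 \<and> w' = w \<and> (\<exists>\<gamma>. s = 5#\<gamma> \<and> s' = 5#\<gamma>))"
proof -
  obtain Z \<gamma> \<alpha> where s: "s = Z#\<gamma>" "s' = \<alpha> @ \<gamma>" and
    t: "(\<exists>a. w = a#w' \<and> (q, Some a, Z, p, \<alpha>) \<in> p_trans Mp1) \<or> (w' = w \<and> (q, None, Z, p, \<alpha>) \<in> p_trans Mp1)"
    using assms unfolding pda_step_def by auto
  from t show ?thesis
  proof (elim disjE exE conjE)
    fix a assume w: "w = a#w'" and tr: "(q, Some a, Z, p, \<alpha>) \<in> p_trans Mp1"
    from tr[unfolded trans_Mp1] show ?thesis
    proof (elim disjE exE conjE)
      fix b assume "q = 0" "p = 0" "b \<in> {0,1}" "Some a = Some b" "Z \<in> {0,1,5}" "\<alpha> = [b,Z]"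
      then show ?thesis using w s by auto
    next
      assume "q = 0" "p = 1" "Some a = Some 2" "Z \<in> {0,1,5}" "\<alpha> = [Z]"
      then show ?thesis using w s by auto
    next
      fix b assume "q = 1" "p = 1" "b \<in> {0,1}" "Some a = Some b" "Z = b" "\<alpha> = []"
      then show ?thesis using w s by auto
    qed simp
  next
    assume w: "w' = w" and tr: "(q, None, Z, p, \<alpha>) \<in> p_trans Mp1"
    from tr[unfolded trans_Mp1] show ?thesis using w s by auto
  qed
qed

lemma step_push: "a \<in> {0,1} \<Longrightarrow> Z \<in> {0,1,5} \<Longrightarrow> pda_step Mp1 (0, a#w, Z#\<gamma>) (0, w, a#Z#\<gamma>)"
  unfolding pda_step_def by (auto simp: trans_Mp1)

lemma step_mid: "Z \<in> {0,1,5} \<Longrightarrow> pda_step Mp1 (0, 2#w, Z#\<gamma>) (1, w, Z#\<gamma>)"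
  unfolding pda_step_def by (auto simp: trans_Mp1 intro!: exI[of _ "[Z]"])

lemma step_pop: "a \<in> {0,1} \<Longrightarrow> pda_step Mp1 (1, a#w, a#\<gamma>) (1, w, \<gamma>)"
  unfolding pda_step_def by (auto simp: trans_Mp1)

lemma step_fin: "pda_step Mp1 (1, w, 5#\<gamma>) (2, w, 5#\<gamma>)"
  unfolding pda_step_def by (auto simp: trans_Mp1 intro!: exI[of _ "[5]"])

lemma run_push: "u \<in> lists {0,1} \<Longrightarrow> Z \<in> {0,1,5} \<Longrightarrow>
   (pda_step Mp1)\<^sup>*\<^sup>* (0, u @ w, Z#\<gamma>) (0, w, rev u @ Z#\<gamma>)"
proof (induction u arbitrary: Z \<gamma>)
  case Nil then show ?case by simp
next
  case (Cons a u)
  have "pda_step Mp1 (0, a # u @ w, Z#\<gamma>) (0, u @ w, a#Z#\<gamma>)" using Cons by (intro step_push) auto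
  moreover have "(pda_step Mp1)\<^sup>*\<^sup>* (0, u @ w, a#Z#\<gamma>) (0, w, rev u @ a#Z#\<gamma>)" using Cons by auto
  ultimately show ?case by simp
qed

lemma run_pop: "v \<in> lists {0,1} \<Longrightarrow> (pda_step Mp1)\<^sup>*\<^sup>* (1, v @ w, v @ \<gamma>) (1, w, \<gamma>)"
proof (induction v)
  case Nil then show ?case by simp
next
  case (Cons a v)
  have "pda_step Mp1 (1, a # v @ w, a # v @ \<gamma>) (1, v @ w, v @ \<gamma>)" using Cons by (intro step_pop) auto
  then show ?case using Cons by simp
qed

definition Inv :: "nat list \<Rightarrow> nat \<times> nat list \<times> nat list \<Rightarrow> bool" where
  "Inv x c = (case c of (q, w, s) \<Rightarrow>
     (q = 0 \<and> (\<exists>u\<in>lists {0,1}. x = u @ w \<and> s = rev u @ [5])) \<or>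
     (q = 1 \<and> (\<exists>u\<in>lists {0,1}. \<exists>v z. x = u @ 2 # v @ w \<and> rev u = v @ z \<and> s = z @ [5])) \<or>
     (q = 2 \<and> (\<exists>u\<in>lists {0,1}. x = u @ 2 # rev u @ w \<and> s = [5])))"

lemma Inv0: "u \<in> lists {0,1} \<Longrightarrow> x = u @ w \<Longrightarrow> s = rev u @ [5] \<Longrightarrow> Inv x (0,w,s)"
  unfolding Inv_def by auto
lemma Inv1: "u \<in> lists {0,1} \<Longrightarrow> x = u @ 2 # v @ w \<Longrightarrow> rev u = v @ z \<Longrightarrow> s = z @ [5] \<Longrightarrow> Inv x (1,w,s)"
  unfolding Inv_def by auto
lemma Inv2: "u \<in> lists {0,1} \<Longrightarrow> x = u @ 2 # rev u @ w \<Longrightarrow> s = [5] \<Longrightarrow> Inv x (2,w,s)"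
  unfolding Inv_def by auto

lemma Inv_step:
  assumes I: "Inv x (q,w,s)" and st: "pda_step Mp1 (q,w,s) (p,w',s')"
  shows "Inv x (p,w',s')"
  using step_cases[OF st]
proof (elim disjE conjE exE)
  fix a Z \<gamma> assume h: "q = 0" "p = 0" "a \<in> {0,1}" "w = a#w'" "s = Z#\<gamma>" "s' = a#Z#\<gamma>"
  then obtain u where u: "u \<in> lists {0,1}" "x = u @ w" "s = rev u @ [5]" using I unfolding Inv_def by auto
  have "u @ [a] \<in> lists {0,1}" "x = (u @ [a]) @ w'" "s' = rev (u @ [a]) @ [5]" using u h by auto
  then show ?thesis unfolding h(2) by (rule Inv0)
next
  assume h: "q = 0" "p = 1" "w = 2#w'" "s' = s"
  then obtain u where u: "u \<in> lists {0,1}" "x = u @ w" "s = rev u @ [5]" using I unfolding Inv_def by auto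
  have "x = u @ 2 # [] @ w'" "rev u = [] @ rev u" "s' = rev u @ [5]" using u h by auto
  then show ?thesis unfolding h(2) by (rule Inv1[OF u(1)])
next
  fix a assume h: "q = 1" "p = 1" "a \<in> {0,1}" "w = a#w'" "s = a#s'"
  then obtain u v z where u: "u \<in> lists {0,1}" "x = u @ 2 # v @ w" "rev u = v @ z" "s = z @ [5]"
    using I unfolding Inv_def by auto
  have "z \<noteq> []"
  proof
    assume "z = []"
    then have "a = 5" using u(4) h(5) by simp
    then show False using h(3) by simp
  qed
  then obtain z' where z: "z = a # z'" using u h by (cases z) auto
  have "x = u @ 2 # (v @ [a]) @ w'" "rev u = (v @ [a]) @ z'" "s' = z' @ [5]" using u h z by auto
  then show ?thesis unfolding h(2) by (rule Inv1[OF u(1)])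
next
  fix \<gamma> assume h: "q = 1" "p = 2" "w' = w" "s = 5#\<gamma>" "s' = 5#\<gamma>"
  then obtain u v z where u: "u \<in> lists {0,1}" "x = u @ 2 # v @ w" "rev u = v @ z" "s = z @ [5]"
    using I unfolding Inv_def by auto
  have "set z \<subseteq> {0,1}" using u(1) u(3) by (metis in_listsD set_append set_rev subset_code(1) sup.cobounded2 subsetD)
  have "z = []"
  proof (rule ccontr)
    assume "z \<noteq> []"
    then have "hd z = 5" using u h by (cases z) auto
    moreover have "hd z \<in> set z" using \<open>z \<noteq> []\<close> by simp
    ultimately show False using \<open>set z \<subseteq> {0,1}\<close> by auto
  qed
  then have "x = u @ 2 # rev u @ w'" "s' = [5]" using u h by auto
  then show ?thesis unfolding h(2) by (rule Inv2[OF u(1)])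
qed

lemma Inv_run: "(pda_step Mp1)\<^sup>*\<^sup>* (0, x, [5]) c \<Longrightarrow> Inv x c"
proof (induction rule: rtranclp_induct)
  case base then show ?case unfolding Inv_def by (auto intro: bexI[of _ "[]"])
next
  case (step b c)
  obtain q w s where b: "b = (q,w,s)" by (cases b) auto
  obtain p w' s' where c: "c = (p,w',s')" by (cases c) auto
  show ?case using Inv_step step b c by blast
qed

lemma L1_DCFL: "L1 \<in> DCFL {0,1,2}"
  unfolding DCFL_def
proof (intro CollectI conjI exI[of _ Mp1])
  show "L1 \<subseteq> lists {0,1,2}" by (rule L1_sub)
  show "dpda {0,1,2} Mp1" by (rule Mp1_dpda)
  show "L1 = {w \<in> lists {0,1,2}. pda_accepts Mp1 w}"
  proof (intro set_eqI iffI)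
    fix x assume "x \<in> L1"
    then obtain u where u: "u \<in> lists {0,1}" "x = u @ 2 # rev u" unfolding L1_def by blast
    have ru: "rev u \<in> lists {0,1}" using u by auto
    have r1: "(pda_step Mp1)\<^sup>*\<^sup>* (0, x, [5]) (0, 2 # rev u, rev u @ [5])"
      using run_push[OF u(1), of 5 "2 # rev u" "[]"] u by simp
    have r2: "pda_step Mp1 (0, 2 # rev u, rev u @ [5]) (1, rev u, rev u @ [5])"
    proof (cases "rev u")
      case Nil then show ?thesis using step_mid[of 5 "[]" "[]"] by simp
    next
      case (Cons a t)
      have "a \<in> {0,1,5}" using ru Cons by auto
      from step_mid[OF this, of "rev u" "t @ [5]"] show ?thesis using Cons by simp
    qed
    have r3: "(pda_step Mp1)\<^sup>*\<^sup>* (1, rev u, rev u @ [5]) (1, [], [5])"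
      using run_pop[OF ru, of "[]" "[5]"] by simp
    have r4: "pda_step Mp1 (1, [], [5]) (2, [], [5])" using step_fin[of "[]" "[]"] by simp
    have "(pda_step Mp1)\<^sup>*\<^sup>* (0, x, [5]) (2, [], [5])"
      using r1 r2 r3 r4 by (meson rtranclp.rtrancl_into_rtrancl rtranclp_trans)
    then show "x \<in> {w \<in> lists {0,1,2}. pda_accepts Mp1 w}"
      using \<open>x \<in> L1\<close> L1_sub unfolding pda_accepts_def by (auto simp: Mp1_def)
  next
    fix x assume "x \<in> {w \<in> lists {0,1,2}. pda_accepts Mp1 w}"
    then obtain p \<gamma> where "p \<in> {2}" "(pda_step Mp1)\<^sup>*\<^sup>* (0, x, [5]) (p, [], \<gamma>)"
      unfolding pda_accepts_def by (auto simp: Mp1_def)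
    then have "Inv x (2, [], \<gamma>)" using Inv_run by auto
    then show "x \<in> L1" unfolding Inv_def L1_def by auto
  qed
qed



theorem proposition4p3:
  shows "(\<exists>(\<Sigma> :: nat set) L. finite \<Sigma> \<and> L \<in> DCFL \<Sigma> \<and> L \<in> RFA_Rn \<Sigma> \<and> L \<notin> REG_n \<Sigma>) \<and>
         (\<exists>(\<Sigma> :: nat set) L. finite \<Sigma> \<and> L \<in> RFA_Rn \<Sigma> \<and> L \<notin> CFL_n \<Sigma>)"
proof
  show "\<exists>(\<Sigma> :: nat set) L. finite \<Sigma> \<and> L \<in> DCFL \<Sigma> \<and> L \<in> RFA_Rn \<Sigma> \<and> L \<notin> REG_n \<Sigma>"
    using L1_DCFL L1_RFA L1_notREG by (intro exI[of _ "{0,1,2}"] exI[of _ L1]) auto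
  show "\<exists>(\<Sigma> :: nat set) L. finite \<Sigma> \<and> L \<in> RFA_Rn \<Sigma> \<and> L \<notin> CFL_n \<Sigma>"
    using L2_RFA[OF pick_bd] L2_notCFL by (intro exI[of _ "{0,1}"] exI[of _ "L2of pick"]) auto
qed

end
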